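(* For every probability vector $\boldsymbol\alpha\in\mathbb R^{\mathcal X}$ and every $r>0$, $$\int_{\mathcal Q'(\boldsymbol\alpha,r)}\ \prod_{x\in\mathcal X'}\frac{1}{2\sqrt{\zeta_x}}\ \mathrm d\boldsymbol\zeta'\ \ge\ r^{\frac{|\mathcal X|-1}{2}}\left(\sqrt{2+\tfrac{1}{|\mathcal X|-1}}-\sqrt2\right)^{|\mathcal X|-1}.$$
   Context: $\mathcal X$ finite, $|\mathcal X|\ge2$. $x_{\max}=x_{\max}(\boldsymbol\alpha)$ is an index of a largest entry of $\boldsymbol\alpha$, $\mathcal X'=\mathcal X\setminus\{x_{\max}\}$. $\omega_\downarrow(a,r)=\max(\sqrt{r^2/4+ar}-r/2,\ r)$ and $\omega'(a,r)=\omega_\downarrow(a,r)/(|\mathcal X|-1)$. $\mathcal Q'(\boldsymbol\alpha,r)=\{\boldsymbol\zeta'=(\zeta_x)_{x\in\mathcal X'}\in\mathbb R^{\mathcal X'}: 0\le\zeta_x-\alpha_x\le\omega'(\alpha_x,r)\ \forall x\in\mathcal X'\}$; the integral is the Lebesgue integral over $\mathbb R^{\mathcal X'}$. *)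

theory Defs
  imports "HOL-Analysis.Analysis" "HOL-Probability.Probability"
begin

definition omega_down :: "real \<Rightarrow> real \<Rightarrow> real" where
  "omega_down a r = max (sqrt (r^2/4 + a*r) - r/2) r"

definition omega' :: "nat \<Rightarrow> real \<Rightarrow> real \<Rightarrow> real" where
  "omega' n a r = omega_down a r / (real n - 1)"

(* Q'(alpha, r) as a subset of the space of extensional functions on X' = UNIV - {xm} *)
definition Qprime :: "('x::finite \<Rightarrow> real) \<Rightarrow> 'x \<Rightarrow> real \<Rightarrow> ('x \<Rightarrow> real) set" where
  "Qprime \<alpha> xm r = {\<zeta> \<in> PiE (UNIV - {xm}) (\<lambda>_. UNIV).
      \<forall>x\<in>UNIV - {xm}. 0 \<le> \<zeta> x - \<alpha> x \<and> \<zeta> x - \<alpha> x \<le> omega' CARD('x) (\<alpha> x) r}"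

end

theory Submission
  imports Defs
begin

lemma oned:
  fixes a b :: real assumes "0 \<le> a" "a \<le> b"
  shows "(\<integral>\<^sup>+y. ennreal (indicator {a..b} y * (1/(2 * sqrt y))) \<partial>lborel) = ennreal (sqrt b - sqrt a)"
proof -
  have "((\<lambda>y. 1/(2 * sqrt y)) has_integral (sqrt b - sqrt a)) {a..b}"
  proof (rule fundamental_theorem_of_calculus_interior[OF assms(2)])
    show "continuous_on {a..b} sqrt" by (intro continuous_intros)
    fix x assume x: "x \<in> {a<..<b}"
    then have "x > 0" using assms by auto
    then have "(sqrt has_real_derivative inverse (sqrt x) / 2) (at x)" by (rule DERIV_real_sqrt)
    then show "(sqrt has_vector_derivative 1/(2 * sqrt x)) (at x)"
      by (simp add: has_real_derivative_iff_has_vector_derivative[symmetric] field_simps)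
  qed
  from this have "((\<lambda>y. indicator {a..b} y * (1/(2 * sqrt y))) has_integral (sqrt b - sqrt a)) UNIV"
  proof -
    have e: "(\<lambda>y. indicator {a..b} y * (1/(2 * sqrt y))) = (\<lambda>y. if y \<in> {a..b} then 1/(2 * sqrt y) else (0::real))"
      by (auto simp: indicator_def)
    show ?thesis unfolding e has_integral_restrict_UNIV by fact
  qed
  then show ?thesis
    using assms by (subst nn_integral_has_integral_lborel[where I="sqrt b - sqrt a"]) (auto simp: indicator_def)
qed

lemma sqdiff: fixes x e :: real assumes "0 \<le> x" "0 < e"
  shows "sqrt (x+e) - sqrt x = e / (sqrt (x+e) + sqrt x)"
proof -
  have p: "sqrt (x+e) + sqrt x > 0" using assms by (simp add: add_pos_nonneg)
  have "(sqrt (x+e) - sqrt x) * (sqrt (x+e) + sqrt x) = e"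
    using assms by (simp add: algebra_simps)
  then show ?thesis using p by (simp add: field_simps)
qed

lemma pointwise:
  fixes a r d :: real assumes a: "0 \<le> a" and r: "0 < r" and d: "0 < d"
    and om: "om \<ge> max (sqrt (r^2/4 + a*r) - r/2) r"
  shows "sqrt (a + om * d) - sqrt a \<ge> sqrt r * (sqrt (2+d) - sqrt 2)"
proof -
  have rhs: "sqrt r * (sqrt (2+d) - sqrt 2) = sqrt (2*r + r*d) - sqrt (2*r)"
    by (simp add: algebra_simps real_sqrt_mult[symmetric])
  also have "\<dots> = (r*d) / (sqrt (2*r + r*d) + sqrt (2*r))"
    using sqdiff[of "2*r" "r*d"] r d by simp
  finally have rhs: "sqrt r * (sqrt (2+d) - sqrt 2) = (r*d) / (sqrt (2*r + r*d) + sqrt (2*r))" .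
  have D1: "sqrt (2*r + r*d) + sqrt (2*r) > 0" using r d by (simp add: add_pos_pos)
  show ?thesis
  proof (cases "a \<le> 2*r")
    case True
    have "om * d \<ge> r * d" using om d by (simp add: mult_right_mono)
    then have "sqrt (a + om*d) - sqrt a \<ge> sqrt (a + r*d) - sqrt a" by simp
    moreover have "sqrt (a + r*d) - sqrt a = (r*d) / (sqrt (a + r*d) + sqrt a)"
      using sqdiff[of a "r*d"] a r d by simp
    moreover have "(r*d) / (sqrt (a + r*d) + sqrt a) \<ge> (r*d) / (sqrt (2*r + r*d) + sqrt (2*r))"
    proof (rule divide_left_mono)
      show "sqrt (a + r*d) + sqrt a \<le> sqrt (2*r + r*d) + sqrt (2*r)"
        using True by (intro add_mono) auto
      show "0 \<le> r*d" using r d by simp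
      show "0 < (sqrt (2*r + r*d) + sqrt (2*r)) * (sqrt (a + r*d) + sqrt a)"
      proof -
        have "r*d > 0" using r d by simp
        then have "sqrt (a + r*d) > 0" using a by simp
        then show ?thesis using D1 a by (intro mult_pos_pos) (auto simp: add_pos_nonneg)
      qed
    qed
    ultimately show ?thesis using rhs by linarith
  next
    case False
    define w where "w = sqrt (r^2/4 + a*r) - r/2"
    have "sqrt (r^2/4 + a*r) \<ge> sqrt ((3*r/2)^2)"
      using False r by (intro real_sqrt_le_mono) (simp add: power2_eq_square algebra_simps)
    then have wr: "w \<ge> r" using r unfolding w_def by simp
    have "(w + r/2)^2 = r^2/4 + a*r" unfolding w_def using a r by simp
    then have aw: "a * r = w^2 + r*w" by (simp add: power2_eq_square algebra_simps)
    have wd: "om * d \<ge> w * d" using om d unfolding w_def by (simp add: mult_right_mono)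
    have wpos: "w > 0" using wr r by simp
    have "sqrt (a + om*d) - sqrt a \<ge> sqrt (a + w*d) - sqrt a" using wd by simp
    moreover have eq2: "sqrt (a + w*d) - sqrt a = (w*d) / (sqrt (a + w*d) + sqrt a)"
      using sqdiff[of a "w*d"] a wpos d by simp
    have "w*d > 0" using wpos d by simp
    then have "sqrt (a + w*d) > 0" using a by simp
    then have D2: "sqrt (a + w*d) + sqrt a > 0" using a by (simp add: add_pos_nonneg)
    have i1: "r * sqrt a \<le> w * sqrt (2*r)"
    proof -
      have "r * sqrt a = sqrt (r^2 * a)" using r by (simp add: real_sqrt_mult)
      also have "\<dots> \<le> sqrt (w^2 * (2*r))"
      proof (rule real_sqrt_le_mono)
        have "r^2 * a = r * (w^2 + r*w)" by (simp only: aw[symmetric]) (simp add: power2_eq_square algebra_simps)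
        also have "\<dots> \<le> r * (2*w^2)" using wr r wpos
          by (intro mult_left_mono) (auto simp: power2_eq_square)
        finally show "r^2 * a \<le> w^2 * (2*r)" by (simp add: algebra_simps)
      qed
      also have "\<dots> = w * sqrt (2*r)" using wpos by (simp add: real_sqrt_mult)
      finally show ?thesis .
    qed
    have i2: "r * sqrt (a + w*d) \<le> w * sqrt (2*r + r*d)"
    proof -
      have "r * sqrt (a + w*d) = sqrt (r^2 * (a + w*d))" using r by (simp add: real_sqrt_mult)
      also have "\<dots> \<le> sqrt (w^2 * (2*r + r*d))"
      proof (rule real_sqrt_le_mono)
        have "r^2 * (a + w*d) = r * (w^2 + r*w) + r*(r*w*d)" by (simp only: aw[symmetric]) (simp add: power2_eq_square algebra_simps)
        also have "\<dots> \<le> r * (2*w^2) + r*(w*w*d)" using wr r wpos d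
          by (intro add_mono mult_left_mono) (auto simp: power2_eq_square)
        finally show "r^2 * (a + w*d) \<le> w^2 * (2*r + r*d)" by (simp add: algebra_simps power2_eq_square)
      qed
      also have "\<dots> = w * sqrt (2*r + r*d)" using wpos by (simp add: real_sqrt_mult)
      finally show ?thesis .
    qed
    have "(r*d) / (sqrt (2*r + r*d) + sqrt (2*r)) \<le> (w*d) / (sqrt (a + w*d) + sqrt a)"
    proof -
      have "r * d * (sqrt (a + w*d) + sqrt a) \<le> w * d * (sqrt (2*r + r*d) + sqrt (2*r))"
      proof -
        have "r * (sqrt (a + w*d) + sqrt a) \<le> w * (sqrt (2*r + r*d) + sqrt (2*r))"
          using i1 i2 by (simp add: distrib_left)
        then have "d * (r * (sqrt (a + w*d) + sqrt a)) \<le> d * (w * (sqrt (2*r + r*d) + sqrt (2*r)))"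
          using d by (intro mult_left_mono) auto
        then show ?thesis by (simp add: mult_ac)
      qed
      then show ?thesis using D1 D2 by (simp add: divide_simps)
    qed
    ultimately show ?thesis using rhs eq2 by linarith
  qed
qed

theorem lemma6:
  fixes \<alpha> :: "'x::finite \<Rightarrow> real" and r :: real and xm :: 'x
  assumes card: "CARD('x) \<ge> 2"
    and nonneg: "\<forall>x. \<alpha> x \<ge> 0"
    and sum1: "(\<Sum>x\<in>UNIV. \<alpha> x) = 1"
    and xm_max: "\<forall>x. \<alpha> x \<le> \<alpha> xm"
    and r: "r > 0"
  shows "(\<integral>\<^sup>+ \<zeta>. indicator (Qprime \<alpha> xm r) \<zeta> *
            ennreal (\<Prod>x\<in>UNIV - {xm}. 1 / (2 * sqrt (\<zeta> x)))
          \<partial>(PiM (UNIV - {xm}) (\<lambda>_. lborel)))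
       \<ge> ennreal (r powr ((real CARD('x) - 1) / 2) *
            (sqrt (2 + 1 / (real CARD('x) - 1)) - sqrt 2) ^ (CARD('x) - 1))"
proof -
  define I where "I = (UNIV - {xm} :: 'x set)"
  define d where "d = 1 / (real CARD('x) - 1)"
  define c where "c = sqrt (2 + d) - sqrt 2"
  define om where "om = (\<lambda>x. omega_down (\<alpha> x) r)"
  define b where "b = (\<lambda>x. \<alpha> x + om x * d)"
  define f where "f = (\<lambda>x y. ennreal (indicator {\<alpha> x..b x} y * (1/(2 * sqrt y))))"
  have d: "d > 0" using card unfolding d_def by simp
  have omge: "om x \<ge> max (sqrt (r^2/4 + \<alpha> x * r) - r/2) r" for x
    unfolding om_def omega_down_def by simp
  have ompos: "om x > 0" for x using omge[of x] r by linarith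
  have omd: "omega' CARD('x) (\<alpha> x) r = om x * d" for x
    unfolding omega'_def om_def d_def by simp
  have ab: "\<alpha> x \<le> b x" for x unfolding b_def using ompos[of x] d by simp
  have finI: "finite I" by simp
  have cardI: "card I = CARD('x) - 1" unfolding I_def by (simp add: card_Diff_subset)
  interpret product_sigma_finite "\<lambda>_::'x. lborel :: real measure"
    by standard
  have step1: "(\<integral>\<^sup>+ \<zeta>. indicator (Qprime \<alpha> xm r) \<zeta> *
            ennreal (\<Prod>x\<in>UNIV - {xm}. 1 / (2 * sqrt (\<zeta> x)))
          \<partial>(PiM (UNIV - {xm}) (\<lambda>_. lborel)))
      = (\<integral>\<^sup>+ \<zeta>. (\<Prod>x\<in>I. f x (\<zeta> x)) \<partial>(PiM I (\<lambda>_. lborel)))"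
    unfolding I_def[symmetric]
  proof (rule nn_integral_cong)
    fix \<zeta> assume z: "\<zeta> \<in> space (PiM I (\<lambda>_. lborel :: real measure))"
    then have zE: "\<zeta> \<in> PiE I (\<lambda>_. UNIV)" by (simp add: space_PiM)
    have "(\<Prod>x\<in>I. f x (\<zeta> x)) = ennreal (\<Prod>x\<in>I. indicator {\<alpha> x..b x} (\<zeta> x) * (1/(2 * sqrt (\<zeta> x))))"
      unfolding f_def
    proof (rule prod_ennreal)
      fix x assume "x \<in> I"
      show "0 \<le> indicator {\<alpha> x..b x} (\<zeta> x) * (1/(2 * sqrt (\<zeta> x)))"
      proof (cases "\<zeta> x \<in> {\<alpha> x..b x}")
        case True
        then have "\<zeta> x \<ge> 0" using nonneg[rule_format, of x] by auto
        then show ?thesis using True by simp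
      qed simp
    qed
    also have "\<dots> = ennreal ((\<Prod>x\<in>I. indicator {\<alpha> x..b x} (\<zeta> x)) * (\<Prod>x\<in>I. 1/(2 * sqrt (\<zeta> x))))"
      by (simp only: prod.distrib)
    finally have R: "(\<Prod>x\<in>I. f x (\<zeta> x)) = \<dots>" .
    show "indicator (Qprime \<alpha> xm r) \<zeta> * ennreal (\<Prod>x\<in>I. 1 / (2 * sqrt (\<zeta> x))) = (\<Prod>x\<in>I. f x (\<zeta> x))"
    proof (cases "\<zeta> \<in> Qprime \<alpha> xm r")
      case True
      have "\<zeta> x \<in> {\<alpha> x..b x}" if xI: "x \<in> I" for x
      proof -
        have "0 \<le> \<zeta> x - \<alpha> x \<and> \<zeta> x - \<alpha> x \<le> omega' CARD('x) (\<alpha> x) r"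
          using True xI unfolding Qprime_def I_def by blast
        then show ?thesis unfolding b_def omd by simp
      qed
      then have "\<forall>x\<in>I. \<zeta> x \<in> {\<alpha> x..b x}" by blast
      then have "(\<Prod>x\<in>I. indicator {\<alpha> x..b x} (\<zeta> x) :: real) = 1" by simp
      then show ?thesis using True R by simp
    next
      case False
      have "\<exists>x\<in>I. \<zeta> x \<notin> {\<alpha> x..b x}"
      proof (rule ccontr)
        assume "\<not> ?thesis"
        then have "\<forall>x\<in>I. 0 \<le> \<zeta> x - \<alpha> x \<and> \<zeta> x - \<alpha> x \<le> omega' CARD('x) (\<alpha> x) r"
          unfolding b_def omd by auto
        then have "\<zeta> \<in> Qprime \<alpha> xm r" using zE unfolding Qprime_def I_def by blast
        then show False using False by simp
      qed
      then obtain x where "x \<in> I" "\<zeta> x \<notin> {\<alpha> x..b x}" by blast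
      then have P0: "(\<Prod>x\<in>I. indicator {\<alpha> x..b x} (\<zeta> x) :: real) = 0"
        using finI by (intro prod_zero) (auto intro!: bexI[of _ x] simp: indicator_def)
      show ?thesis unfolding R P0 using False by simp
    qed
  qed
  have step2: "(\<integral>\<^sup>+ \<zeta>. (\<Prod>x\<in>I. f x (\<zeta> x)) \<partial>(PiM I (\<lambda>_. lborel)))
      = (\<Prod>x\<in>I. integral\<^sup>N lborel (f x))"
    by (rule product_nn_integral_prod[OF finI]) (simp add: f_def)
  have step3: "integral\<^sup>N lborel (f x) = ennreal (sqrt (b x) - sqrt (\<alpha> x))" for x
    unfolding f_def using oned[OF _ ab[of x]] nonneg by simp
  have step4: "(\<Prod>x\<in>I. ennreal (sqrt (b x) - sqrt (\<alpha> x))) = ennreal (\<Prod>x\<in>I. sqrt (b x) - sqrt (\<alpha> x))"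
    by (rule prod_ennreal) (use ab in simp)
  have "sqrt 2 \<le> sqrt (2 + d)" using d by simp
  then have c0: "0 \<le> sqrt r * c" unfolding c_def using r by simp
  have step5: "(\<Prod>x\<in>I. sqrt r * c) \<le> (\<Prod>x\<in>I. sqrt (b x) - sqrt (\<alpha> x))"
  proof (rule prod_mono)
    fix x assume "x \<in> I"
    show "0 \<le> sqrt r * c \<and> sqrt r * c \<le> sqrt (b x) - sqrt (\<alpha> x)"
      using c0 pointwise[OF _ r d omge[of x]] nonneg unfolding b_def c_def by simp
  qed
  have step6: "(\<Prod>x\<in>I. sqrt r * c) = r powr ((real CARD('x) - 1) / 2) * c ^ (CARD('x) - 1)"
  proof -
    have "(\<Prod>x\<in>I. sqrt r * c) = (sqrt r)^(CARD('x) - 1) * c ^ (CARD('x) - 1)"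
      by (simp add: cardI power_mult_distrib)
    moreover have "(sqrt r)^(CARD('x) - 1) = r powr ((real CARD('x) - 1) / 2)"
    proof -
      have "(sqrt r)^(CARD('x) - 1) = (r powr (1/2)) ^ (CARD('x) - 1)"
        using r by (simp add: powr_half_sqrt)
      also have "\<dots> = r powr (real (CARD('x) - 1) * (1/2))"
        using r by (simp add: powr_powr flip: powr_realpow)
      also have "real (CARD('x) - 1) = real CARD('x) - 1" using card by (simp add: of_nat_diff)
      finally show ?thesis by simp
    qed
    ultimately show ?thesis by simp
  qed
  show ?thesis
    unfolding step1 step2 step3 step4 using step5 step6 unfolding c_def d_def
    by (simp add: ennreal_leI)
qed

end
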